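(* Let $\alpha=[a_0;a_1,a_2,\dots]$ be irrational with convergents $p_k/q_k$. For integers $k \ge 1$ and $0 \le M <q_k$ let \[ B_{k,M}^*(x)= \log \frac{P_M^* (\alpha , (-1)^k x/q_k)}{P_M^* (p_k/q_k , (-1)^kx/q_k)} - \sum_{\substack{1 \le n \le M, \\ n \ne q_{k-1},\ n\ne q_k-q_{k-1}}} \sin (\pi n\| q_k \alpha \| /q_k) \cot \left( \pi \frac{n(-1)^k p_k+x}{q_k} \right) , \] where for $\beta\in\{\alpha,p_k/q_k\}$, \[ P_M^*(\beta , y) = \prod_{\substack{1 \le n \le M, \\ n \ne q_{k-1},\ n\ne q_k-q_{k-1}}} |2 \sin (\pi (n \beta + y))| . \] Let $k \ge 1$ and $0 \le M < q_k$, and assume that $q_k \| q_k \alpha \| \le 2(1-c_k)$ and $-2<x \le 2-\frac{q_k \| q_k \alpha \|}{1-c_k}$ with some $c_k$ such that $100/q_k^2 \le c_k<1$. Then \[ -C \frac{\log (4/c_k)}{(2-|x|)^2 a_{k+1}^2} \le B_{k,M}^*(x) \le C \frac{1}{a_{k+1}^2 q_k} \] with a universal constant $C>0$.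
   Context: $p_k/q_k=[a_0;a_1,\dots,a_k]$ are the convergents of $\alpha$ (with $q_{0}=1$); $\|y\|$ is distance to nearest integer. *)

theory Defs
  imports Complex_Main
begin

fun cf_rest :: "real \<Rightarrow> nat \<Rightarrow> real" where
  "cf_rest \<alpha> 0 = \<alpha>"
| "cf_rest \<alpha> (Suc k) = 1 / (cf_rest \<alpha> k - of_int \<lfloor>cf_rest \<alpha> k\<rfloor>)"

definition cf_a :: "real \<Rightarrow> nat \<Rightarrow> int" where
  "cf_a \<alpha> k = \<lfloor>cf_rest \<alpha> k\<rfloor>"

fun cf_p :: "real \<Rightarrow> nat \<Rightarrow> int" where
  "cf_p \<alpha> 0 = cf_a \<alpha> 0"
| "cf_p \<alpha> (Suc 0) = cf_a \<alpha> 1 * cf_a \<alpha> 0 + 1"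
| "cf_p \<alpha> (Suc (Suc k)) = cf_a \<alpha> (Suc (Suc k)) * cf_p \<alpha> (Suc k) + cf_p \<alpha> k"

fun cf_q :: "real \<Rightarrow> nat \<Rightarrow> int" where
  "cf_q \<alpha> 0 = 1"
| "cf_q \<alpha> (Suc 0) = cf_a \<alpha> 1"
| "cf_q \<alpha> (Suc (Suc k)) = cf_a \<alpha> (Suc (Suc k)) * cf_q \<alpha> (Suc k) + cf_q \<alpha> k"

definition dist_int :: "real \<Rightarrow> real" where
  "dist_int y = \<bar>y - of_int (round y)\<bar>"

definition idx_set :: "real \<Rightarrow> nat \<Rightarrow> nat \<Rightarrow> nat set" where
  "idx_set \<alpha> k M = {n \<in> {1..M}. int n \<noteq> cf_q \<alpha> (k - 1) \<and> int n \<noteq> cf_q \<alpha> k - cf_q \<alpha> (k - 1)}"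

definition Pstar :: "real \<Rightarrow> nat \<Rightarrow> nat \<Rightarrow> real \<Rightarrow> real \<Rightarrow> real" where
  "Pstar \<alpha> k M \<beta> y = (\<Prod>n\<in>idx_set \<alpha> k M. \<bar>2 * sin (pi * (real n * \<beta> + y))\<bar>)"

definition Bstar :: "real \<Rightarrow> nat \<Rightarrow> nat \<Rightarrow> real \<Rightarrow> real" where
  "Bstar \<alpha> k M x =
     (let p = cf_p \<alpha> k; q = cf_q \<alpha> k; y = (-1) ^ k * x / of_int q in
      ln (Pstar \<alpha> k M \<alpha> y / Pstar \<alpha> k M (of_int p / of_int q) y)
      - (\<Sum>n\<in>idx_set \<alpha> k M.
           sin (pi * real n * dist_int (of_int q * \<alpha>) / of_int q)
           * cot (pi * (real n * (-1) ^ k * of_int p + x) / of_int q)))"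

end

theory Submission
  imports Defs
begin


declare cf_rest.simps(2)[simp del] cf_q.simps(3)[simp del] cf_p.simps(3)[simp del]

lemma cf_rest_irrat: "\<alpha> \<notin> \<rat> \<Longrightarrow> cf_rest \<alpha> k \<notin> \<rat>"
proof (induction k)
  case 0 then show ?case by simp
next
  case (Suc k)
  let ?r = "cf_rest \<alpha> k"
  have ne: "?r - of_int \<lfloor>?r\<rfloor> \<noteq> 0"
  proof
    assume "?r - of_int \<lfloor>?r\<rfloor> = 0"
    then have "?r = of_int \<lfloor>?r\<rfloor>" by simp
    then have "?r \<in> \<rat>" by (metis Rats_of_int)
    with Suc show False by simp
  qed
  show ?case
  proof
    assume "cf_rest \<alpha> (Suc k) \<in> \<rat>"
    then have "1 / (?r - of_int \<lfloor>?r\<rfloor>) \<in> \<rat>" by (simp add: cf_rest.simps)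
    then have "1 / (1 / (?r - of_int \<lfloor>?r\<rfloor>)) \<in> \<rat>" by (rule Rats_divide[OF Rats_1])
    then have "?r - of_int \<lfloor>?r\<rfloor> \<in> \<rat>" using ne by simp
    then have "?r - of_int \<lfloor>?r\<rfloor> + of_int \<lfloor>?r\<rfloor> \<in> \<rat>" by (intro Rats_add) auto
    with Suc show False by simp
  qed
qed

lemma cf_frac_pos: "\<alpha> \<notin> \<rat> \<Longrightarrow> cf_rest \<alpha> k - of_int \<lfloor>cf_rest \<alpha> k\<rfloor> > 0"
proof -
  assume a: "\<alpha> \<notin> \<rat>"
  let ?r = "cf_rest \<alpha> k"
  have "?r \<noteq> of_int \<lfloor>?r\<rfloor>" using cf_rest_irrat[OF a, of k] by (metis Rats_of_int)
  moreover have "of_int \<lfloor>?r\<rfloor> \<le> ?r" by simp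
  ultimately show ?thesis by linarith
qed

lemma cf_rest_Suc_gt1: "\<alpha> \<notin> \<rat> \<Longrightarrow> cf_rest \<alpha> (Suc k) > 1"
proof -
  assume a: "\<alpha> \<notin> \<rat>"
  let ?r = "cf_rest \<alpha> k"
  have p: "?r - of_int \<lfloor>?r\<rfloor> > 0" by (rule cf_frac_pos[OF a])
  have "?r - of_int \<lfloor>?r\<rfloor> < 1" by linarith
  with p show ?thesis by (simp add: cf_rest.simps less_divide_eq)
qed

lemma cf_a_pos: "\<alpha> \<notin> \<rat> \<Longrightarrow> k \<ge> 1 \<Longrightarrow> cf_a \<alpha> k \<ge> 1"
proof -
  assume a: "\<alpha> \<notin> \<rat>" and k: "k \<ge> 1"
  then obtain j where "k = Suc j" by (cases k) auto
  with cf_rest_Suc_gt1[OF a, of j] show ?thesis unfolding cf_a_def by (simp add: le_floor_iff)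
qed

lemma cf_rest_unfold: "\<alpha> \<notin> \<rat> \<Longrightarrow> cf_rest \<alpha> k = of_int (cf_a \<alpha> k) + 1 / cf_rest \<alpha> (Suc k)"
  using cf_frac_pos[of \<alpha> k] by (simp add: cf_a_def cf_rest.simps)

lemma cf_q_pos2: "\<alpha> \<notin> \<rat> \<Longrightarrow> cf_q \<alpha> k \<ge> 1 \<and> cf_q \<alpha> (Suc k) \<ge> 1"
proof (induction k)
  case 0 then show ?case using cf_a_pos[of \<alpha> 1] by simp
next
  case (Suc k)
  then have h: "cf_q \<alpha> k \<ge> 1" "cf_q \<alpha> (Suc k) \<ge> 1" by auto
  have a: "cf_a \<alpha> (Suc (Suc k)) \<ge> 1" using cf_a_pos[OF Suc.prems] by simp
  have "cf_a \<alpha> (Suc (Suc k)) * cf_q \<alpha> (Suc k) \<ge> 1" using h a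
    using mult_mono[of 1 "cf_a \<alpha> (Suc (Suc k))" 1 "cf_q \<alpha> (Suc k)"] by simp
  then show ?case using h by (simp add: cf_q.simps)
qed

lemma cf_q_pos: "\<alpha> \<notin> \<rat> \<Longrightarrow> cf_q \<alpha> k \<ge> 1"
  using cf_q_pos2 by blast

lemma cf_det: "cf_p \<alpha> (Suc j) * cf_q \<alpha> j - cf_p \<alpha> j * cf_q \<alpha> (Suc j) = (-1) ^ j"
proof (induction j)
  case 0 then show ?case by (simp add: algebra_simps)
next
  case (Suc j)
  have "cf_p \<alpha> (Suc (Suc j)) * cf_q \<alpha> (Suc j) - cf_p \<alpha> (Suc j) * cf_q \<alpha> (Suc (Suc j))
     = - (cf_p \<alpha> (Suc j) * cf_q \<alpha> j - cf_p \<alpha> j * cf_q \<alpha> (Suc j))"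
    by (simp only: cf_p.simps cf_q.simps) (simp add: distrib_left distrib_right)
  then show ?case using Suc by simp
qed

lemma frac_shift_aux:
  fixes P1 P0 Q1 Q0 a t :: real
  assumes "t \<noteq> 0"
  shows "(P1 * (a + 1 / t) + P0) / (Q1 * (a + 1 / t) + Q0) = ((a * P1 + P0) * t + P1) / ((a * Q1 + Q0) * t + Q1)"
proof -
  have "(P1 * (a + 1 / t) + P0) / (Q1 * (a + 1 / t) + Q0) = ((P1 * (a + 1 / t) + P0) * t) / ((Q1 * (a + 1 / t) + Q0) * t)"
    using assms by simp
  also have "(P1 * (a + 1 / t) + P0) * t = (a * P1 + P0) * t + P1" using assms by (simp add: algebra_simps)
  also have "(Q1 * (a + 1 / t) + Q0) * t = (a * Q1 + Q0) * t + Q1" using assms by (simp add: algebra_simps)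
  finally show ?thesis .
qed

lemma base_aux:
  fixes x a0 r1 a1 r2 :: real
  assumes "x = a0 + 1 / r1" "r1 = a1 + 1 / r2" "r2 > 1" "a1 \<ge> 1"
  shows "x = ((a1 * a0 + 1) * r2 + a0) / (a1 * r2 + 1)"
proof -
  have "a1 * r2 \<ge> 1 * 1" using assms(3,4) by (intro mult_mono) auto
  then have p: "a1 * r2 + 1 > 0" by simp
  have "r1 = (a1 * r2 + 1) / r2" using assms(2,3) by (simp add: field_simps)
  then have "x = a0 + r2 / (a1 * r2 + 1)" using assms(1) by simp
  then show ?thesis using p by (simp add: field_simps)
qed

lemma cf_conv:
  assumes a: "\<alpha> \<notin> \<rat>"
  shows "\<alpha> = (of_int (cf_p \<alpha> (Suc j)) * cf_rest \<alpha> (Suc (Suc j)) + of_int (cf_p \<alpha> j))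
            / (of_int (cf_q \<alpha> (Suc j)) * cf_rest \<alpha> (Suc (Suc j)) + of_int (cf_q \<alpha> j))"
proof (induction j)
  case 0
  have g1: "cf_rest \<alpha> 1 > 1" "cf_rest \<alpha> 2 > 1" using cf_rest_Suc_gt1[OF a, of 0] cf_rest_Suc_gt1[OF a, of 1, unfolded Suc_1] by auto
  have e0: "\<alpha> = of_int (cf_a \<alpha> 0) + 1 / cf_rest \<alpha> 1" using cf_rest_unfold[OF a, of 0] by (metis cf_rest.simps(1) One_nat_def)
  have e1: "cf_rest \<alpha> 1 = of_int (cf_a \<alpha> 1) + 1 / cf_rest \<alpha> 2" using cf_rest_unfold[OF a, of 1, unfolded Suc_1] .
  have "real_of_int (cf_a \<alpha> 1) \<ge> 1" using cf_a_pos[OF a, of 1] by simp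
  note X = base_aux[OF e0 e1 g1(2) this]
  have Y: "((of_int (cf_a \<alpha> 1) * of_int (cf_a \<alpha> 0) + 1) * cf_rest \<alpha> 2 + of_int (cf_a \<alpha> 0)) / (of_int (cf_a \<alpha> 1) * cf_rest \<alpha> 2 + 1)
    = (of_int (cf_p \<alpha> (Suc 0)) * cf_rest \<alpha> (Suc (Suc 0)) + of_int (cf_p \<alpha> 0))
            / (of_int (cf_q \<alpha> (Suc 0)) * cf_rest \<alpha> (Suc (Suc 0)) + of_int (cf_q \<alpha> 0))"
    by (simp add: numeral_2_eq_2)
  show ?case using X Y by (rule trans)
next
  case (Suc j)
  let ?t = "cf_rest \<alpha> (Suc (Suc (Suc j)))"
  have t1: "?t > 1" using cf_rest_Suc_gt1[OF a] by blast
  have u: "cf_rest \<alpha> (Suc (Suc j)) = of_int (cf_a \<alpha> (Suc (Suc j))) + 1 / ?t"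
    using cf_rest_unfold[OF a] by blast
  have qp: "cf_q \<alpha> (Suc j) \<ge> 1" "cf_q \<alpha> j \<ge> 1" "cf_q \<alpha> (Suc (Suc j)) \<ge> 1" by (rule cf_q_pos[OF a])+
  have den: "of_int (cf_q \<alpha> (Suc (Suc j))) * ?t + of_int (cf_q \<alpha> (Suc j)) > (0::real)"
  proof -
    have "real_of_int (cf_q \<alpha> (Suc (Suc j))) \<ge> 1" "real_of_int (cf_q \<alpha> (Suc j)) \<ge> 1" using qp by simp_all
    then have "of_int (cf_q \<alpha> (Suc (Suc j))) * ?t > 0" using t1 by simp
    then show ?thesis using \<open>real_of_int (cf_q \<alpha> (Suc j)) \<ge> 1\<close> by linarith
  qed
  have "\<alpha> = (of_int (cf_p \<alpha> (Suc j)) * (of_int (cf_a \<alpha> (Suc (Suc j))) + 1 / ?t) + of_int (cf_p \<alpha> j))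
            / (of_int (cf_q \<alpha> (Suc j)) * (of_int (cf_a \<alpha> (Suc (Suc j))) + 1 / ?t) + of_int (cf_q \<alpha> j))"
    by (rule Suc.IH[unfolded u])
  also have "\<dots> = (of_int (cf_p \<alpha> (Suc (Suc j))) * ?t + of_int (cf_p \<alpha> (Suc j)))
            / (of_int (cf_q \<alpha> (Suc (Suc j))) * ?t + of_int (cf_q \<alpha> (Suc j)))"
    using frac_shift_aux[of ?t "of_int (cf_p \<alpha> (Suc j))" "of_int (cf_a \<alpha> (Suc (Suc j)))" "of_int (cf_p \<alpha> j)" "of_int (cf_q \<alpha> (Suc j))" "of_int (cf_q \<alpha> j)"] t1
    by (simp only: cf_p.simps(3) cf_q.simps(3) of_int_add of_int_mult)
  finally show ?case .
qed


lemma cf_q_mono: "\<alpha> \<notin> \<rat> \<Longrightarrow> cf_q \<alpha> j \<le> cf_q \<alpha> (Suc j)"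
proof (cases j)
  case 0
  assume a: "\<alpha> \<notin> \<rat>"
  then show ?thesis using 0 cf_a_pos[OF a, of 1] by simp
next
  case (Suc i)
  assume a: "\<alpha> \<notin> \<rat>"
  have "cf_a \<alpha> (Suc (Suc i)) * cf_q \<alpha> (Suc i) \<ge> 1 * cf_q \<alpha> (Suc i)"
    using cf_a_pos[OF a, of "Suc (Suc i)"] cf_q_pos[OF a, of "Suc i"] by (intro mult_right_mono) auto
  then show ?thesis using Suc cf_q_pos[OF a, of i] by (simp add: cf_q.simps)
qed

lemma conv_aux:
  fixes x P P' Q Q' t s E :: real
  assumes "E = Q * t + Q'" "E > 0" "x = (P * t + P') / E" "P * Q' - P' * Q = s"
  shows "Q * x - P = - s / E"
proof -
  have "Q * x - P = (Q * (P * t + P') - P * E) / E" unfolding assms(3) using assms(2) by (simp add: field_simps)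
  also have "Q * (P * t + P') - P * E = - s" using assms(1,4) by (simp add: algebra_simps)
  finally show ?thesis by simp
qed

lemma cf_main:
  assumes a: "\<alpha> \<notin> \<rat>" and k: "k = Suc j" and q2: "cf_q \<alpha> k \<ge> 2"
  shows "of_int (cf_q \<alpha> k) * \<alpha> - of_int (cf_p \<alpha> k) = (-1)^k * dist_int (of_int (cf_q \<alpha> k) * \<alpha>)"
    and "dist_int (of_int (cf_q \<alpha> k) * \<alpha>) > 0"
    and "dist_int (of_int (cf_q \<alpha> k) * \<alpha>) * of_int (cf_q \<alpha> k) * of_int (cf_a \<alpha> (k+1)) \<le> 1"
proof -
  let ?t = "cf_rest \<alpha> (Suc k)"
  let ?q = "real_of_int (cf_q \<alpha> k)" and ?q' = "real_of_int (cf_q \<alpha> j)"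
  let ?p = "real_of_int (cf_p \<alpha> k)" and ?p' = "real_of_int (cf_p \<alpha> j)"
  define E where "E = ?q * ?t + ?q'"
  have t1: "?t > 1" using cf_rest_Suc_gt1[OF a] by blast
  have qq: "?q \<ge> 2" "?q' \<ge> 1" using q2 cf_q_pos[OF a, of j] by simp_all
  have "?q * ?t \<ge> ?q * 1" using qq t1 by (intro mult_left_mono) auto
  then have E2: "E > 2" using qq E_def by linarith
  have conv: "\<alpha> = (?p * ?t + ?p') / E" using cf_conv[OF a, of j] k E_def by simp
  have det: "?p * ?q' - ?p' * ?q = (-1)^j"
  proof -
    have "cf_p \<alpha> k * cf_q \<alpha> j - cf_p \<alpha> j * cf_q \<alpha> k = (-1)^j" using cf_det[of \<alpha> j] k by simp
    then have "real_of_int (cf_p \<alpha> k * cf_q \<alpha> j - cf_p \<alpha> j * cf_q \<alpha> k) = (-1)^j" by simp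
    then show ?thesis by simp
  qed
  have main: "?q * \<alpha> - ?p = - ((-1)^j) / E" by (rule conv_aux[OF E_def _ conv det]) (use E2 in simp)
  then have main2: "?q * \<alpha> - ?p = (-1)^k * (1 / E)" using k by simp
  have abs: "\<bar>?q * \<alpha> - ?p\<bar> = 1 / E" using main2 E2 by (simp add: abs_mult)
  have "round (?q * \<alpha>) = cf_p \<alpha> k" using abs E2 by (intro round_unique') simp
  then have dd: "dist_int (?q * \<alpha>) = 1 / E" unfolding dist_int_def using abs by simp
  show "?q * \<alpha> - ?p = (-1)^k * dist_int (?q * \<alpha>)" using main2 dd by simp
  show "dist_int (?q * \<alpha>) > 0" using dd E2 by simp
  have "of_int (cf_a \<alpha> (k+1)) \<le> ?t" unfolding cf_a_def by simp
  then have "?q * of_int (cf_a \<alpha> (k+1)) \<le> ?q * ?t" using qq by (intro mult_left_mono) auto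
  then have "?q * of_int (cf_a \<alpha> (k+1)) \<le> E" using E_def qq by linarith
  then have "dist_int (?q * \<alpha>) * (?q * of_int (cf_a \<alpha> (k+1))) \<le> dist_int (?q * \<alpha>) * E"
    using dd E2 by (intro mult_left_mono) auto
  also have "dist_int (?q * \<alpha>) * E = 1" using dd E2 by simp
  finally show "dist_int (?q * \<alpha>) * ?q * of_int (cf_a \<alpha> (k+1)) \<le> 1" by (simp add: mult.assoc)
qed

lemma cf_cong:
  assumes k: "k = Suc j"
  shows "(-1)^k * cf_p \<alpha> k * cf_q \<alpha> j = -1 + cf_q \<alpha> k * ((-1)^k * cf_p \<alpha> j)"
proof -
  have d: "cf_p \<alpha> k * cf_q \<alpha> j = (-1)^j + cf_p \<alpha> j * cf_q \<alpha> k" using cf_det[of \<alpha> j] k by simp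
  have "(-1::int)^k * cf_p \<alpha> k * cf_q \<alpha> j = (-1)^k * (cf_p \<alpha> k * cf_q \<alpha> j)" by simp
  also have "\<dots> = (-1)^k * (-1)^j + cf_q \<alpha> k * ((-1)^k * cf_p \<alpha> j)" using d by (simp add: algebra_simps)
  also have "(-1::int)^k * (-1)^j = -1" using k by (simp flip: power_add)
  finally show ?thesis .
qed



lemma sin_ge_xcos: assumes "0 \<le> u" "u \<le> pi" shows "u * cos u \<le> sin u"
proof -
  let ?k = "\<lambda>u. sin u - u * cos u"
  have "?k 0 \<le> ?k u"
  proof (rule DERIV_nonneg_imp_nondecreasing[OF assms(1)])
    fix t assume "0 \<le> t" "t \<le> u"
    then have "0 \<le> t * sin t" using assms by (intro mult_nonneg_nonneg sin_ge_zero) auto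
    moreover have "DERIV ?k t :> t * sin t"
      by (auto intro!: derivative_eq_intros simp: algebra_simps)
    ultimately show "\<exists>y. DERIV ?k t :> y \<and> 0 \<le> y" by blast
  qed
  then show ?thesis by simp
qed

lemma sin_div_antimono:
  assumes "0 < s" "s \<le> t" "t \<le> pi"
  shows "sin t / t \<le> sin s / s"
proof (rule DERIV_nonpos_imp_nonincreasing[OF assms(2)])
  fix u assume u: "s \<le> u" "u \<le> t"
  then have u0: "u > 0" using assms by simp
  have "DERIV (\<lambda>u. sin u / u) u :> (cos u * u - sin u) / u^2"
    using u0 by (auto intro!: derivative_eq_intros simp: power2_eq_square)
  moreover have "(cos u * u - sin u) / u^2 \<le> 0"
    using sin_ge_xcos[of u] u assms by (intro divide_nonpos_nonneg) (auto simp: mult.commute)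
  ultimately show "\<exists>y. DERIV (\<lambda>u. sin u / u) u :> y \<and> y \<le> 0" by blast
qed

lemma sin_concave_ineq:
  assumes "0 < s" "s \<le> t" "t \<le> pi"
  shows "s * sin t \<le> t * sin s"
  using sin_div_antimono[OF assms] assms by (simp add: divide_simps mult.commute)

lemma jordan:
  assumes "0 \<le> y" "y \<le> pi / 2"
  shows "2 / pi * y \<le> sin y"
proof (cases "y = 0")
  case True then show ?thesis by simp
next
  case False
  then have "y > 0" using assms by simp
  from sin_concave_ineq[OF this assms(2)] have "y * 1 \<le> pi / 2 * sin y" by simp
  then show ?thesis using pi_gt_zero by (simp add: field_simps)
qed

lemma sin_diff_abs_le: "\<bar>sin (a + h) - sin a\<bar> \<le> \<bar>h\<bar>" for a h :: real
proof -
  have "\<bar>sin (a + h) - sin a\<bar> = \<bar>2 * sin (h / 2) * cos ((2 * a + h) / 2)\<bar>"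
    by (simp add: sin_diff_sin algebra_simps)
  also have "\<dots> \<le> 2 * \<bar>sin (h / 2)\<bar> * 1"
    by (simp add: abs_mult mult_left_le)
  also have "\<dots> \<le> 2 * \<bar>h / 2\<bar>" using abs_sin_x_le_abs_x[of "h/2"] by simp
  finally show ?thesis by simp
qed

lemma cos_ge_quad: "1 - h^2 / 2 \<le> cos h" for h :: real
proof -
  have "cos h = 1 - 2 * sin (h/2) ^ 2" using cos_double_sin[of "h/2"] by simp
  moreover have "sin (h/2) ^ 2 \<le> (h/2)^2"
    using abs_sin_x_le_abs_x[of "h/2"] by (metis abs_ge_zero power2_abs power_mono)
  ultimately show ?thesis by (simp add: power_divide)
qed

lemma ratio_eq:
  fixes A h :: real
  assumes "sin A \<noteq> 0"
  shows "sin (A + h) / sin A = cos h + sin h * cot A"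
  using assms by (simp add: sin_add cot_def field_simps)

lemma F_upper:
  assumes "0 < A" "A < pi" "0 < A + h" "A + h < pi"
  shows "ln (sin (A + h) / sin A) - sin h * cot A \<le> 0"
proof -
  have sA: "sin A > 0" using assms by (intro sin_gt_zero) auto
  have sAh: "sin (A + h) > 0" using assms by (intro sin_gt_zero) auto
  have "ln (sin (A + h) / sin A) \<le> sin (A + h) / sin A - 1"
    using sA sAh by (intro ln_le_minus_one) simp
  also have "\<dots> = cos h + sin h * cot A - 1" using ratio_eq[of A h] sA by simp
  finally show ?thesis using cos_le_one[of h] by linarith
qed

lemma inv_sin_sq:
  assumes "0 < A" "A < pi"
  shows "1 / (sin A)^2 \<le> (pi^2 / 4) * (1 / A^2 + 1 / (pi - A)^2)"
proof -
  have sA: "sin A > 0" using assms by (intro sin_gt_zero) auto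
  have key: "1 / (sin A)^2 \<le> (pi^2/4) * (1 / B^2)" if "0 < B" "B \<le> pi/2" "sin B = sin A" for B
  proof -
    have "2 / pi * B \<le> sin A" using jordan[of B] that by simp
    moreover have "2 / pi * B > 0" using that by simp
    ultimately have "(2 / pi * B)^2 \<le> (sin A)^2" by (intro power_mono) auto
    then have "1 / (sin A)^2 \<le> 1 / (2 / pi * B)^2"
      using \<open>2 / pi * B > 0\<close> sA by (intro divide_left_mono) (auto intro!: mult_pos_pos)
    also have "\<dots> = (pi^2/4) * (1 / B^2)" by (simp add: power_divide power_mult_distrib)
    finally show ?thesis .
  qed
  show ?thesis
  proof (cases "A \<le> pi / 2")
    case True
    then have "1 / (sin A)^2 \<le> (pi^2/4) * (1 / A^2)" using key[of A] assms by simp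
    moreover have "(pi^2/4) * (1 / A^2) \<le> (pi^2 / 4) * (1 / A^2 + 1 / (pi - A)^2)"
      by (intro mult_left_mono) auto
    ultimately show ?thesis by linarith
  next
    case False
    then have "1 / (sin A)^2 \<le> (pi^2/4) * (1 / (pi - A)^2)" using key[of "pi - A"] assms by simp
    moreover have "(pi^2/4) * (1 / (pi - A)^2) \<le> (pi^2 / 4) * (1 / A^2 + 1 / (pi - A)^2)"
      by (intro mult_left_mono) auto
    ultimately show ?thesis by linarith
  qed
qed

lemma F_lower:
  fixes A h c :: real
  assumes A0: "0 < A" and Api: "A < pi" and h0: "0 \<le> h" and hc: "h \<le> (1 - c) * (pi - A)"
    and c0: "0 < c" and c1: "c < 1"
  shows "ln (sin (A + h) / sin A) - sin h * cot A \<ge>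
     - (h^2 / 2 + 8 * (h / A)^2 + 8 * (h / (pi - A))^2 + 4 * (h / (pi - A))^2 * ln (1 / c))"
proof -
  define D where "D = pi - A"
  define w where "w = h / D"
  have D0: "D > 0" using Api D_def by simp
  have w0: "0 \<le> w" using h0 D0 w_def by simp
  have w1: "w \<le> 1 - c" using hc D0 unfolding w_def D_def by (simp add: divide_simps mult.commute)
  have "(1 - c) * D < D" using c0 D0 by (simp add: algebra_simps)
  moreover have "h \<le> (1 - c) * D" using hc D_def by simp
  ultimately have hD: "h < D" by linarith
  have sA: "sin A > 0" using A0 Api by (intro sin_gt_zero) auto
  have sAh: "sin (A + h) > 0" using A0 h0 hD D_def by (intro sin_gt_zero) auto
  define v where "v = sin (A + h) / sin A"
  have v0: "v > 0" using sA sAh v_def by simp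
  have veq: "v = cos h + sin h * cot A" using ratio_eq[of A h] sA v_def by simp
  have F: "ln (sin (A + h) / sin A) - sin h * cot A = ln v - v + cos h"
    using veq v_def by simp
  have ch: "cos h \<ge> 1 - h^2 / 2" by (rule cos_ge_quad)
  have lc: "ln (1 / c) \<ge> 0" using c0 c1 by simp
  have "pi^2 \<le> 4^2" using pi_less_4 pi_gt_zero by (intro power_mono) auto
  then have pi4: "pi^2 / 2 \<le> 8" by simp
  show ?thesis
  proof (cases "v \<ge> 1/2")
    case True
    have "ln (1 / v) \<le> 1 / v - 1" using v0 by (intro ln_le_minus_one) simp
    then have lnv: "ln v \<ge> 1 - 1 / v" using v0 by (simp add: ln_div)
    have "1 - 1 / v - v = -(((v - 1)^2) / v) - 1" using v0 by (simp add: field_simps power2_eq_square)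
    moreover have "(v - 1)^2 / v \<le> (v - 1)^2 / (1/2)" using True v0
      by (intro divide_left_mono) auto
    then have "(v - 1)^2 / v \<le> 2 * (v - 1)^2" by simp
    ultimately have s1: "ln v - v \<ge> - 2 * (v - 1)^2 - 1" using lnv by linarith
    have "v - 1 = (sin (A + h) - sin A) / sin A" using v_def sA by (simp add: field_simps)
    then have "(v - 1)^2 = (sin (A + h) - sin A)^2 * (1 / (sin A)^2)" by (simp add: power_divide)
    also have "\<dots> \<le> h^2 * ((pi^2 / 4) * (1 / A^2 + 1 / D^2))"
    proof (rule mult_mono)
      show "(sin (A + h) - sin A)^2 \<le> h^2"
        using sin_diff_abs_le[of A h] by (metis abs_ge_zero power2_abs power_mono)
      show "1 / (sin A)^2 \<le> (pi^2 / 4) * (1 / A^2 + 1 / D^2)" using inv_sin_sq[OF A0 Api] D_def by simp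
    qed auto
    finally have "2 * (v - 1)^2 \<le> (pi^2 / 2) * (h^2 / A^2 + h^2 / D^2)" by (simp add: algebra_simps)
    also have "\<dots> \<le> 8 * (h^2 / A^2 + h^2 / D^2)" using pi4 by (intro mult_right_mono) auto
    finally have "2 * (v - 1)^2 \<le> 8 * (h / A)^2 + 8 * (h / D)^2" by (simp add: power_divide algebra_simps)
    moreover have "0 \<le> 4 * (h / D)^2 * ln (1 / c)" using lc by simp
    ultimately show ?thesis using F s1 ch unfolding D_def[symmetric] by linarith
  next
    case False
    have "D - h = pi - (A + h)" using D_def by simp
    then have e: "sin (A + h) = sin (D - h)" by (simp only: sin_pi_minus)
    have "(D - h) * sin D \<le> D * sin (D - h)"
      using sin_concave_ineq[of "D - h" D] hD D0 Api A0 D_def h0 by simp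
    moreover have "sin D = sin A" unfolding D_def by simp
    ultimately have "(1 - w) * sin A \<le> sin (A + h)" using e D0 unfolding w_def
      by (simp add: divide_simps algebra_simps mult.commute)
    then have "(1 - w) * sin A \<le> v * sin A" using v_def sA by simp
    then have "1 - w \<le> v" using sA by simp
    then have vc: "c \<le> v" and w2: "w > 1/2" using w1 False by linarith+
    have "ln c \<le> ln v" using vc c0 by simp
    moreover have "ln c = - ln (1 / c)" using c0 by (simp add: ln_div)
    moreover have "(1/2)^2 \<le> w^2" using w2 by (intro power_mono) auto
    then have "4 * w^2 \<ge> 1" by (simp add: power2_eq_square)
    then have "1 * ln (1 / c) \<le> 4 * w^2 * ln (1 / c)" using lc by (intro mult_right_mono)
    then have "ln (1 / c) \<le> 4 * w^2 * ln (1 / c)" by simp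
    moreover have "0 \<le> 8 * (h / A)^2 + 8 * (h / (pi - A))^2" by simp
    moreover have "4 * w^2 * ln (1 / c) = 4 * (h / (pi - A))^2 * ln (1 / c)" by (simp add: w_def D_def)
    ultimately show ?thesis using F False ch by linarith
  qed
qed


lemma sum_inv_sq_aux:
  fixes d :: real
  assumes "d > 0" "N \<ge> 1"
  shows "(\<Sum>i<N. 1 / (real i + d)^2) \<le> 1 / d^2 + 2 - 2 / real N"
  using assms(2)
proof (induction N rule: dec_induct)
  case base then show ?case by simp
next
  case (step N)
  have N1: "real N \<ge> 1" using step by simp
  have "(real N + d)^2 \<ge> (real N)^2" using assms(1) N1 by (intro power_mono) auto
  then have "1 / (real N + d)^2 \<le> 1 / (real N)^2" using N1 by (intro divide_left_mono) (auto intro!: mult_pos_pos)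
  also have "1 / (real N)^2 \<le> 2 / real N - 2 / real (Suc N)"
  proof -
    have "2 / real N - 2 / real (Suc N) = 2 / (real N * (real N + 1))" using N1 by (simp add: field_simps)
    moreover have "real N * (real N + 1) \<le> 2 * (real N)^2" using N1 by (simp add: power2_eq_square algebra_simps)
    ultimately show ?thesis using N1 by (simp add: divide_simps power2_eq_square)
  qed
  finally show ?case using step.IH by simp
qed

lemma sum_inv_sq:
  fixes d :: real
  assumes "d > 0" "d \<le> 4"
  shows "(\<Sum>i<N. 1 / (real i + d)^2) \<le> 33 / d^2"
proof (cases "N = 0")
  case True then show ?thesis using assms by simp
next
  case False
  then have "(\<Sum>i<N. 1 / (real i + d)^2) \<le> 1 / d^2 + 2 - 2 / real N" using sum_inv_sq_aux assms by simp
  also have "\<dots> \<le> 1 / d^2 + 2" by simp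
  also have "2 \<le> 32 / d^2"
  proof -
    have "d^2 \<le> 4^2" using assms by (intro power_mono) auto
    then show ?thesis using assms by (simp add: divide_simps)
  qed
  then have "1 / d^2 + 2 \<le> 33 / d^2" by (simp add: add_divide_distrib[symmetric])
  finally show ?thesis by simp
qed

lemma sum_inj_le:
  fixes F :: "nat \<Rightarrow> real" and g :: "nat \<Rightarrow> nat"
  assumes "finite I" "inj_on g I" "\<And>n. n \<in> I \<Longrightarrow> g n < N"
    "\<And>n. n \<in> I \<Longrightarrow> F n \<le> 1 / (real (g n) + d)^2" "d > 0" "d \<le> 4"
  shows "(\<Sum>n\<in>I. F n) \<le> 33 / d^2"
proof -
  have "(\<Sum>n\<in>I. F n) \<le> (\<Sum>n\<in>I. 1 / (real (g n) + d)^2)" using assms(4) by (rule sum_mono)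
  also have "\<dots> = (\<Sum>i\<in>g ` I. 1 / (real i + d)^2)" using sum.reindex[OF assms(2), of "\<lambda>i. 1 / (real i + d)^2"] by simp
  also have "\<dots> \<le> (\<Sum>i<N. 1 / (real i + d)^2)"
    using assms(3) by (intro sum_mono2) auto
  also have "\<dots> \<le> 33 / d^2" using sum_inv_sq assms(5,6) by blast
  finally show ?thesis .
qed



lemma divq:
  fixes q p q' s t Z :: int
  assumes cong: "s * p * q' = -1 + q * t" and d: "q dvd s * p * Z"
  shows "q dvd Z"
proof -
  have "(s * p * Z) * q' = Z * (s * p * q')" by (simp add: algebra_simps)
  also have "\<dots> = Z * (-1 + q * t)" using cong by simp
  finally have "Z = q * t * Z - (s * p * Z) * q'" by (simp add: algebra_simps)
  moreover have "q dvd q * t * Z - (s * p * Z) * q'" using d by (intro dvd_diff) auto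
  ultimately show ?thesis by simp
qed

lemma small_dvd:
  fixes q Z :: int
  assumes "q dvd Z" "\<bar>Z\<bar> < q"
  shows "Z = 0"
proof (rule ccontr)
  assume "Z \<noteq> 0"
  then have "\<bar>q\<bar> \<le> \<bar>Z\<bar>" using assms(1) by (rule dvd_imp_le_int)
  then show False using assms(2) by linarith
qed

lemma res_range:
  fixes q p q' s t N :: int
  assumes cong: "s * p * q' = -1 + q * t" and q'1: "1 \<le> q'" and q'q: "q' \<le> q"
    and N1: "1 \<le> N" and Nq: "N < q" and Nn1: "N \<noteq> q'" and Nn2: "N \<noteq> q - q'"
  shows "2 \<le> (s * p * N) mod q \<and> (s * p * N) mod q \<le> q - 2"
proof -
  have q0: "q > 0" using N1 Nq by simp
  let ?r = "(s * p * N) mod q"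
  have r0: "0 \<le> ?r" "?r < q" using q0 by simp_all
  have "?r \<noteq> 0"
  proof
    assume "?r = 0"
    then have "q dvd s * p * N" by (simp add: dvd_eq_mod_eq_0)
    then have "q dvd N" by (rule divq[OF cong])
    then show False using small_dvd[of q N] N1 Nq by simp
  qed
  moreover have "?r \<noteq> 1"
  proof
    assume r1: "?r = 1"
    have "(s * p * N) mod q = 1 mod q" using r1 q0 N1 Nq by simp
    then have "q dvd s * p * N - 1" by (simp add: mod_eq_dvd_iff)
    then have "q dvd (s * p * N - 1) + q * t" by simp
    moreover have "(s * p * N - 1) + q * t = s * p * (N + q')" using cong by (simp add: algebra_simps)
    ultimately have "q dvd s * p * (N + q')" by simp
    then have "q dvd N + q'" by (rule divq[OF cong])
    then have "q dvd (N + q') - q" by (intro dvd_diff) auto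
    then have "(N + q') - q = 0" using small_dvd[of q "N + q' - q"] N1 Nq q'1 q'q by simp
    then show False using Nn2 by simp
  qed
  moreover have "?r \<noteq> q - 1"
  proof
    assume r1: "?r = q - 1"
    have "(s * p * N) mod q = (-1) mod q" using r1 q0 by (simp add: zmod_minus1)
    then have "q dvd s * p * N - (-1)" by (simp add: mod_eq_dvd_iff)
    then have "q dvd (s * p * N + 1) - q * t" by simp
    moreover have "(s * p * N + 1) - q * t = s * p * (N - q')" using cong by (simp add: algebra_simps)
    ultimately have "q dvd s * p * (N - q')" by simp
    then have "q dvd N - q'" by (rule divq[OF cong])
    then have "N - q' = 0" using small_dvd[of q "N - q'"] N1 Nq q'1 q'q by simp
    then show False using Nn1 by simp
  qed
  ultimately show ?thesis using r0 by linarith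
qed

lemma res_inj:
  fixes q p q' s t N M :: int
  assumes cong: "s * p * q' = -1 + q * t"
    and "1 \<le> N" "N < q" "1 \<le> M" "M < q" "(s * p * N) mod q = (s * p * M) mod q"
  shows "N = M"
proof -
  have "q dvd s * p * N - s * p * M" using assms(6) by (simp add: mod_eq_dvd_iff)
  then have "q dvd s * p * (N - M)" by (simp add: algebra_simps)
  then have "q dvd N - M" by (rule divq[OF cong])
  then have "N - M = 0" using small_dvd[of q "N - M"] assms by simp
  then show ?thesis by simp
qed



lemma cos_int_pi_sq: "(cos (pi * of_int m))^2 = 1"
  using sin_npi_int[of m] sin_cos_squared_add[of "pi * of_int m"] by simp

lemma abs_sin_shift: "\<bar>sin (z + pi * of_int m)\<bar> = \<bar>sin z\<bar>"
proof -
  have "sin (z + pi * of_int m) = sin z * cos (pi * of_int m)" by (simp add: sin_add)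
  moreover have "\<bar>cos (pi * of_int m)\<bar> = 1" using cos_int_pi_sq[of m]
    by (metis abs_power2 power2_eq_1_iff abs_minus_cancel)
  ultimately show ?thesis by (simp add: abs_mult)
qed

lemma cot_shift: "cot (z + pi * of_int m) = cot z"
proof -
  have c: "cos (pi * of_int m) \<noteq> 0" using cos_int_pi_sq[of m] by auto
  have "sin (z + pi * of_int m) = sin z * cos (pi * of_int m)" by (simp add: sin_add)
  moreover have "cos (z + pi * of_int m) = cos z * cos (pi * of_int m)" by (simp add: cos_add)
  ultimately show ?thesis using c by (simp add: cot_def)
qed

lemma abs_sin_sign: "S = 1 \<or> S = -1 \<Longrightarrow> \<bar>sin (S * z)\<bar> = \<bar>sin z\<bar>" for S z :: real
  by auto

lemma term_id:
  fixes q p e x al S :: real and n :: nat and R m :: int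
  assumes q0: "q > 0" and S: "S = 1 \<or> S = -1" and qa: "q * al - p = S * e"
    and Rm: "S * p * real n = of_int R + q * of_int m"
  shows "\<bar>2 * sin (pi * (real n * al + S * x / q))\<bar> = 2 * \<bar>sin (pi * (of_int R + x) / q + pi * real n * e / q)\<bar>"
    and "\<bar>2 * sin (pi * (real n * (p / q) + S * x / q))\<bar> = 2 * \<bar>sin (pi * (of_int R + x) / q)\<bar>"
    and "cot (pi * (real n * S * p + x) / q) = cot (pi * (of_int R + x) / q)"
proof -
  have SS: "S * S = 1" using S by auto
  have al: "al = (p + S * e) / q" using qa q0 by (simp add: field_simps)
  have "pi * (real n * al + S * x / q) = S * (pi * (S * p * real n + real n * e + x) / q)"
    unfolding al using q0 SS by (simp add: field_simps)
  also have "\<dots> = S * ((pi * (of_int R + x) / q + pi * real n * e / q) + pi * of_int m)"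
    unfolding Rm using q0 by (simp add: field_simps)
  finally have e1: "pi * (real n * al + S * x / q) = S * ((pi * (of_int R + x) / q + pi * real n * e / q) + pi * of_int m)" .
  show "\<bar>2 * sin (pi * (real n * al + S * x / q))\<bar> = 2 * \<bar>sin (pi * (of_int R + x) / q + pi * real n * e / q)\<bar>"
    unfolding e1 abs_mult using abs_sin_sign[OF S] abs_sin_shift by simp
  have "pi * (real n * (p / q) + S * x / q) = S * (pi * (S * p * real n + x) / q)"
    using q0 SS by (simp add: field_simps)
  also have "\<dots> = S * (pi * (of_int R + x) / q + pi * of_int m)"
    unfolding Rm using q0 by (simp add: field_simps)
  finally have e2: "pi * (real n * (p / q) + S * x / q) = S * (pi * (of_int R + x) / q + pi * of_int m)" .
  show "\<bar>2 * sin (pi * (real n * (p / q) + S * x / q))\<bar> = 2 * \<bar>sin (pi * (of_int R + x) / q)\<bar>"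
    unfolding e2 abs_mult using abs_sin_sign[OF S] abs_sin_shift by simp
  have "pi * (real n * S * p + x) / q = pi * (of_int R + x) / q + pi * of_int m"
  proof -
    have "real n * S * p = of_int R + q * of_int m" using Rm by (simp add: algebra_simps)
    then show ?thesis using q0 by (simp add: field_simps)
  qed
  then show "cot (pi * (real n * S * p + x) / q) = cot (pi * (of_int R + x) / q)" using cot_shift by simp
qed



lemma canc_frac: "c \<noteq> 0 \<Longrightarrow> q \<noteq> 0 \<Longrightarrow> (c * a / q) / (c * b / q) = a / (b::real)"
  by (cases "b = 0") (simp_all add: field_simps)

lemma inv_sq_mono: "0 < a \<Longrightarrow> a \<le> b \<Longrightarrow> 1 / b^2 \<le> 1 / (a::real)^2"
  by (intro divide_left_mono power_mono) (auto intro!: mult_pos_pos)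

lemma arith1:
  fixes T U V a b l lam :: real
  assumes "T \<ge> 0" "U \<ge> 0" "V \<ge> 0" "l \<ge> 1" "0 \<le> lam" "lam \<le> l" "a \<le> T * U" "0 \<le> b" "b \<le> T * V"
  shows "8 * a + 8 * b + 4 * b * lam \<le> 12 * l * T * (U + V)"
proof -
  have TU: "T * U \<ge> 0" "T * V \<ge> 0" using assms by auto
  have 1: "T * U * 1 \<le> T * U * l" using TU assms(4) by (intro mult_left_mono) auto
  have 2: "T * V * 1 \<le> T * V * l" using TU assms(4) by (intro mult_left_mono) auto
  have 3: "b * lam \<le> T * V * lam" using assms by (intro mult_right_mono) auto
  have 4: "T * V * lam \<le> T * V * l" using assms TU by (intro mult_left_mono) auto
  have "12 * l * T * (U + V) = 12 * (T * U * l) + 12 * (T * V * l)" by (simp add: algebra_simps)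
  moreover have "T * U * l \<ge> 0" using TU assms(4) by simp
  ultimately show ?thesis using 1 2 3 4 assms(7,9) by linarith
qed

lemma main_bound:
  fixes \<alpha> x c :: real and k M :: nat
  assumes a: "\<alpha> \<notin> \<rat>" and k1: "k \<ge> 1" and Mq: "int M < cf_q \<alpha> k"
    and hx1: "-2 < x" and hx2: "x \<le> 2 - of_int (cf_q \<alpha> k) * dist_int (of_int (cf_q \<alpha> k) * \<alpha>) / (1 - c)"
    and hc1: "100 / (of_int (cf_q \<alpha> k))\<^sup>2 \<le> c" and hc2: "c < 1"
  shows "- 1000 * ln (4 / c) / ((2 - \<bar>x\<bar>)\<^sup>2 * (of_int (cf_a \<alpha> (k + 1)))\<^sup>2) \<le> Bstar \<alpha> k M x \<and>
    Bstar \<alpha> k M x \<le> 1000 / ((of_int (cf_a \<alpha> (k + 1)))\<^sup>2 * of_int (cf_q \<alpha> k))"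
proof -
  obtain j where k: "k = Suc j" using k1 by (cases k) auto
  define qi where "qi = cf_q \<alpha> k"
  define p where "p = cf_p \<alpha> k"
  define q' where "q' = cf_q \<alpha> j"
  define ai where "ai = cf_a \<alpha> (k + 1)"
  define q where "q = real_of_int qi"
  define e where "e = dist_int (q * \<alpha>)"
  define S where "S = ((-1)::real) ^ k"
  define Si where "Si = ((-1)::int) ^ k"
  define ll where "ll = ln (4 / c)"
  have qi1: "qi \<ge> 1" using cf_q_pos[OF a] qi_def by simp
  have q1: "q \<ge> 1" using qi1 q_def by simp
  have c0: "c > 0" using hc1 q1 qi_def q_def by (smt (verit) divide_pos_pos zero_less_power)
  have "100 / q^2 < 1" using hc1 hc2 qi_def q_def by simp
  then have "100 < q^2" using q1 by (simp add: divide_simps)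
  moreover have "q \<le> 10 \<Longrightarrow> q^2 \<le> 10^2" using q1 by (intro power_mono) auto
  ultimately have "q > 10" by force
  then have q11: "qi \<ge> 11" using q_def by simp
  have q2: "cf_q \<alpha> k \<ge> 2" using q11 qi_def by simp
  note cm = cf_main[OF a k q2]
  have qa: "q * \<alpha> - of_int p = S * e" using cm(1) by (simp add: q_def qi_def p_def e_def S_def)
  have e0: "e > 0" using cm(2) by (simp add: q_def qi_def e_def)
  have eqa: "e * q * of_int ai \<le> 1" using cm(3) by (simp add: q_def qi_def e_def ai_def)
  have ai1: "ai \<ge> 1" using cf_a_pos[OF a, of "k+1"] ai_def by simp
  have cong: "Si * p * q' = -1 + qi * (Si * cf_p \<alpha> j)" using cf_cong[OF k, of \<alpha>] by (simp add: Si_def p_def q'_def qi_def)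
  have q'1: "1 \<le> q'" using cf_q_pos[OF a] q'_def by simp
  have q'q: "q' \<le> qi" using cf_q_mono[OF a, of j] q'_def qi_def k by simp
  have S1: "S = 1 \<or> S = -1" unfolding S_def by (cases "even k") auto
  have SSi: "S = of_int Si" by (simp add: S_def Si_def)
  have x2: "x < 2"
  proof -
    have "q * e / (1 - c) > 0" using q1 e0 hc2 by simp
    then show ?thesis using hx2 qi_def q_def e_def by simp
  qed
  define d where "d = 2 - \<bar>x\<bar>"
  have d0: "d > 0" and d4: "d \<le> 4" using hx1 x2 d_def by auto
  define I where "I = idx_set \<alpha> k M"
  have finI: "finite I" unfolding I_def idx_set_def by simp
  have cardI: "card I \<le> M"
  proof -
    have "I \<subseteq> {1..M}" unfolding I_def idx_set_def by auto
    then have "card I \<le> card {1..M}" by (intro card_mono) auto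
    then show ?thesis by simp
  qed
  have Iprop: "1 \<le> int n \<and> int n < qi \<and> int n \<noteq> q' \<and> int n \<noteq> qi - q'" if "n \<in> I" for n
    using that Mq unfolding I_def idx_set_def qi_def q'_def using k by auto
  define R where "R n = (Si * p * int n) mod qi" for n
  define m where "m n = (Si * p * int n) div qi" for n
  have Rr: "2 \<le> R n \<and> R n \<le> qi - 2" if "n \<in> I" for n
    unfolding R_def using res_range[OF cong q'1 q'q] Iprop[OF that] by blast
  have Rinj: "inj_on R I"
  proof (rule inj_onI)
    fix n1 n2 assume "n1 \<in> I" "n2 \<in> I" "R n1 = R n2"
    then have "int n1 = int n2" using res_inj[OF cong] Iprop unfolding R_def by blast
    then show "n1 = n2" by simp
  qed
  have Rm: "S * of_int p * real n = of_int (R n) + q * of_int (m n)" for n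
  proof -
    have "Si * p * int n = qi * m n + R n" unfolding R_def m_def by simp
    then have "real_of_int (Si * p * int n) = real_of_int (qi * m n + R n)" by simp
    then show ?thesis unfolding SSi q_def by simp
  qed
  define A where "A n = pi * (of_int (R n) + x) / q" for n
  define h where "h n = pi * real n * e / q" for n
  have q0: "q > 0" using q1 by simp
  have nq: "real n < q" if "n \<in> I" for n using Iprop[OF that] q_def by simp
  have RxA: "of_int (R n) + x > 0" if "n \<in> I" for n using Rr[OF that] hx1 by simp
  have RxB: "q - of_int (R n) - x > 0" if "n \<in> I" for n using Rr[OF that] x2 q_def by simp
  have Apos: "A n > 0" if "n \<in> I" for n using RxA[OF that] q0 A_def by simp
  have Api: "A n < pi" if "n \<in> I" for n
  proof -
    have "(of_int (R n) + x) / q < 1" using RxB[OF that] q0 by simp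
    then have "pi * ((of_int (R n) + x) / q) < pi * 1" by (intro mult_strict_left_mono) auto
    then show ?thesis unfolding A_def by simp
  qed
  have piA: "pi - A n = pi * (q - of_int (R n) - x) / q" for n
    unfolding A_def using q0 by (simp add: field_simps)
  have h0: "h n \<ge> 0" for n using e0 q0 h_def by simp
  have hc: "h n \<le> (1 - c) * (pi - A n)" if "n \<in> I" for n
  proof -
    have "q * e \<le> (1 - c) * (2 - x)" using hx2 hc2 qi_def q_def e_def by (simp add: field_simps)
    also have "\<dots> \<le> (1 - c) * (q - of_int (R n) - x)" using Rr[OF that] hc2 q_def
      by (intro mult_left_mono) auto
    finally have 1: "q * e \<le> (1 - c) * (q - of_int (R n) - x)" .
    have "real n * e \<le> q * e" using nq[OF that] e0 by simp
    with 1 have "real n * e \<le> (1 - c) * (q - of_int (R n) - x)" by linarith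
    then have "pi * (real n * e) / q \<le> pi * ((1 - c) * (q - of_int (R n) - x)) / q"
      using q0 by (intro divide_right_mono mult_left_mono) auto
    then show ?thesis unfolding h_def piA by (simp add: algebra_simps)
  qed
  define G where "G n = ln (sin (A n + h n) / sin (A n)) - sin (h n) * cot (A n)" for n
  have sinA: "sin (A n) > 0" if "n \<in> I" for n using Apos[OF that] Api[OF that] by (intro sin_gt_zero) auto
  have sinAh: "sin (A n + h n) > 0" if "n \<in> I" for n
  proof -
    have "h n < pi - A n" using hc[OF that] c0 Api[OF that] h0[of n]
      by (smt (verit) mult_less_cancel_right2)
    then show ?thesis using Apos[OF that] h0[of n] by (intro sin_gt_zero) auto
  qed
  have B0: "Bstar \<alpha> k M x = ln ((\<Prod>n\<in>I. \<bar>2 * sin (pi * (real n * \<alpha> + S * x / q))\<bar>)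
        / (\<Prod>n\<in>I. \<bar>2 * sin (pi * (real n * (of_int p / q) + S * x / q))\<bar>))
      - (\<Sum>n\<in>I. sin (h n) * cot (pi * (real n * S * of_int p + x) / q))"
    unfolding Bstar_def Let_def Pstar_def by (simp add: I_def p_def qi_def q_def S_def e_def h_def)
  have P1: "(\<Prod>n\<in>I. \<bar>2 * sin (pi * (real n * \<alpha> + S * x / q))\<bar>) = (\<Prod>n\<in>I. 2 * sin (A n + h n))"
  proof (rule prod.cong[OF refl])
    fix n assume n: "n \<in> I"
    have "\<bar>2 * sin (pi * (real n * \<alpha> + S * x / q))\<bar> = 2 * \<bar>sin (A n + h n)\<bar>"
      unfolding A_def h_def by (rule term_id(1)[OF q0 S1 qa Rm])
    then show "\<bar>2 * sin (pi * (real n * \<alpha> + S * x / q))\<bar> = 2 * sin (A n + h n)" using sinAh[OF n] by simp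
  qed
  have P2: "(\<Prod>n\<in>I. \<bar>2 * sin (pi * (real n * (of_int p / q) + S * x / q))\<bar>) = (\<Prod>n\<in>I. 2 * sin (A n))"
  proof (rule prod.cong[OF refl])
    fix n assume n: "n \<in> I"
    have "\<bar>2 * sin (pi * (real n * (of_int p / q) + S * x / q))\<bar> = 2 * \<bar>sin (A n)\<bar>"
      unfolding A_def by (rule term_id(2)[OF q0 S1 qa Rm])
    then show "\<bar>2 * sin (pi * (real n * (of_int p / q) + S * x / q))\<bar> = 2 * sin (A n)" using sinA[OF n] by simp
  qed
  have P3: "(\<Sum>n\<in>I. sin (h n) * cot (pi * (real n * S * of_int p + x) / q)) = (\<Sum>n\<in>I. sin (h n) * cot (A n))"
  proof (rule sum.cong[OF refl])
    fix n assume n: "n \<in> I"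
    have "cot (pi * (real n * S * of_int p + x) / q) = cot (A n)"
      unfolding A_def by (rule term_id(3)[OF q0 S1 qa Rm])
    then show "sin (h n) * cot (pi * (real n * S * of_int p + x) / q) = sin (h n) * cot (A n)" by simp
  qed
  have L1: "ln ((\<Prod>n\<in>I. 2 * sin (A n + h n)) / (\<Prod>n\<in>I. 2 * sin (A n))) = (\<Sum>n\<in>I. ln (sin (A n + h n) / sin (A n)))"
  proof -
    have "(\<Prod>n\<in>I. 2 * sin (A n + h n)) / (\<Prod>n\<in>I. 2 * sin (A n)) = (\<Prod>n\<in>I. (2 * sin (A n + h n)) / (2 * sin (A n)))"
      by (rule prod_dividef[symmetric])
    also have "\<dots> = (\<Prod>n\<in>I. sin (A n + h n) / sin (A n))" by simp
    finally have "ln ((\<Prod>n\<in>I. 2 * sin (A n + h n)) / (\<Prod>n\<in>I. 2 * sin (A n))) = ln (\<Prod>n\<in>I. sin (A n + h n) / sin (A n))" by simp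
    also have "\<dots> = (\<Sum>n\<in>I. ln (sin (A n + h n) / sin (A n)))"
      using finI sinA sinAh by (intro ln_prod) (auto simp: less_imp_neq[symmetric])
    finally show ?thesis .
  qed
  have Beq: "Bstar \<alpha> k M x = (\<Sum>n\<in>I. G n)"
    unfolding B0 P1 P2 P3 L1 G_def by (simp add: sum_subtractf)
  have Ahpi: "A n + h n < pi" if "n \<in> I" for n
    using hc[OF that] c0 Api[OF that] h0[of n] by (smt (verit) mult_less_cancel_right2)
  have Gup: "G n \<le> 0" if "n \<in> I" for n
    unfolding G_def using Apos[OF that] Api[OF that] Ahpi[OF that] h0[of n] by (intro F_upper) auto
  have Bup: "Bstar \<alpha> k M x \<le> 0" unfolding Beq using Gup by (intro sum_nonpos) auto
  have aipos: "real_of_int ai > 0" using ai1 by simp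
  have up: "Bstar \<alpha> k M x \<le> 1000 / ((of_int (cf_a \<alpha> (k + 1)))\<^sup>2 * of_int (cf_q \<alpha> k))"
  proof -
    have "0 \<le> (1000::real) / ((of_int (cf_a \<alpha> (k + 1)))\<^sup>2 * of_int (cf_q \<alpha> k))"
      using aipos q0 by (simp add: ai_def q_def qi_def)
    then show ?thesis using Bup by linarith
  qed
  define T where "T = (q * e)^2"
  define U where "U n = 1 / (of_int (R n) + x)^2" for n
  define V where "V n = 1 / (q - of_int (R n) - x)^2" for n
  define Lf where "Lf n = (h n)^2 / 2 + 8 * (h n / A n)^2 + 8 * (h n / (pi - A n))^2 + 4 * (h n / (pi - A n))^2 * ln (1 / c)" for n
  have GL: "G n \<ge> - Lf n" if "n \<in> I" for n
    unfolding G_def Lf_def by (rule F_lower[OF Apos[OF that] Api[OF that] h0 hc[OF that] c0 hc2])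
  have l1: "ll \<ge> 1"
  proof -
    have "ln 4 \<le> ll" unfolding ll_def using c0 hc2 by (subst ln_le_cancel_iff) (auto simp: divide_simps)
    moreover have "1 \<le> ln (4::real)" using exp_le by (subst ln_ge_iff) auto
    ultimately show ?thesis by linarith
  qed
  have lam0: "0 \<le> ln (1 / c)" using c0 hc2 by simp
  have laml: "ln (1 / c) \<le> ll" unfolding ll_def using c0 by (subst ln_le_cancel_iff) (auto simp: divide_simps)
  have T0: "T \<ge> 0" unfolding T_def by simp
  have Lb: "Lf n \<le> 8 * e^2 + 12 * ll * T * (U n + V n)" if n: "n \<in> I" for n
  proof -
    have hA: "h n / A n = real n * e / (of_int (R n) + x)"
      unfolding h_def A_def using q0 canc_frac[of pi q "real n * e" "of_int (R n) + x"] by (simp add: mult.assoc)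
    have hD: "h n / (pi - A n) = real n * e / (q - of_int (R n) - x)"
      unfolding h_def piA using q0 canc_frac[of pi q "real n * e" "q - of_int (R n) - x"] by (simp add: mult.assoc)
    have ne: "(real n * e)^2 \<le> T" unfolding T_def using nq[OF n] e0 by (intro power_mono) auto
    have a1: "(h n / A n)^2 \<le> T * U n"
      unfolding hA U_def power_divide using ne by (simp add: divide_right_mono)
    have b1: "(h n / (pi - A n))^2 \<le> T * V n"
      unfolding hD V_def power_divide using ne by (simp add: divide_right_mono)
    have hle: "h n \<le> pi * e"
    proof -
      have "real n / q \<le> 1" using nq[OF n] q0 by simp
      then have "pi * e * (real n / q) \<le> pi * e * 1" using e0 by (intro mult_left_mono) auto
      then show ?thesis unfolding h_def by (simp add: mult.commute mult.left_commute)
    qed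
    have "(h n)^2 \<le> (pi * e)^2" using hle h0[of n] by (intro power_mono) auto
    also have "\<dots> \<le> 4^2 * e^2" unfolding power_mult_distrib
      using pi_less_4 by (intro mult_right_mono power_mono) auto
    finally have h2: "(h n)^2 / 2 \<le> 8 * e^2" by simp
    have "8 * (h n / A n)^2 + 8 * (h n / (pi - A n))^2 + 4 * (h n / (pi - A n))^2 * ln (1 / c)
        \<le> 12 * ll * T * (U n + V n)"
      by (rule arith1[OF T0 _ _ l1 lam0 laml a1 _ b1]) (auto simp: U_def V_def)
    then show ?thesis unfolding Lf_def using h2 by linarith
  qed
  have SU: "(\<Sum>n\<in>I. U n) \<le> 33 / d^2"
  proof (rule sum_inj_le[OF finI _ _ _ d0 d4])
    show "inj_on (\<lambda>n. nat (R n - 2)) I"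
    proof (rule inj_onI)
      fix n1 n2 assume "n1 \<in> I" "n2 \<in> I" "nat (R n1 - 2) = nat (R n2 - 2)"
      then have "R n1 - 2 = R n2 - 2" using Rr[OF \<open>n1 \<in> I\<close>] Rr[OF \<open>n2 \<in> I\<close>] by (subst (asm) eq_nat_nat_iff) auto
      then have "R n1 = R n2" by simp
      then show "n1 = n2" using Rinj \<open>n1 \<in> I\<close> \<open>n2 \<in> I\<close> by (auto dest: inj_onD)
    qed
    fix n assume n: "n \<in> I"
    show "nat (R n - 2) < nat qi" using Rr[OF n] by simp
    have "real (nat (R n - 2)) = of_int (R n) - 2" using Rr[OF n] by simp
    then have "real (nat (R n - 2)) + d \<le> of_int (R n) + x" "0 < real (nat (R n - 2)) + d" using d_def d0 by auto
    then show "U n \<le> 1 / (real (nat (R n - 2)) + d)^2" unfolding U_def by (intro inv_sq_mono) auto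
  qed
  have SV: "(\<Sum>n\<in>I. V n) \<le> 33 / d^2"
  proof (rule sum_inj_le[OF finI _ _ _ d0 d4])
    show "inj_on (\<lambda>n. nat (qi - 2 - R n)) I"
    proof (rule inj_onI)
      fix n1 n2 assume "n1 \<in> I" "n2 \<in> I" "nat (qi - 2 - R n1) = nat (qi - 2 - R n2)"
      then have "int (nat (qi - 2 - R n1)) = int (nat (qi - 2 - R n2))" by simp
      moreover have "int (nat (qi - 2 - R n1)) = qi - 2 - R n1" using Rr[OF \<open>n1 \<in> I\<close>] by simp
      moreover have "int (nat (qi - 2 - R n2)) = qi - 2 - R n2" using Rr[OF \<open>n2 \<in> I\<close>] by simp
      ultimately have "qi - 2 - R n1 = qi - 2 - R n2" by simp
      then have "R n1 = R n2" by simp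
      then show "n1 = n2" using Rinj \<open>n1 \<in> I\<close> \<open>n2 \<in> I\<close> by (auto dest: inj_onD)
    qed
    fix n assume n: "n \<in> I"
    show "nat (qi - 2 - R n) < nat qi" using Rr[OF n] by simp
    have "real (nat (qi - 2 - R n)) = q - 2 - of_int (R n)" using Rr[OF n] q_def by simp
    then have "real (nat (qi - 2 - R n)) + d \<le> q - of_int (R n) - x" "0 < real (nat (qi - 2 - R n)) + d" using d_def d0 by auto
    then show "V n \<le> 1 / (real (nat (qi - 2 - R n)) + d)^2" unfolding V_def by (intro inv_sq_mono) auto
  qed
  have "(\<Sum>n\<in>I. Lf n) \<le> (\<Sum>n\<in>I. 8 * e^2 + 12 * ll * T * (U n + V n))"
    using Lb by (rule sum_mono)
  also have "\<dots> = 8 * e^2 * real (card I) + 12 * ll * T * ((\<Sum>n\<in>I. U n) + (\<Sum>n\<in>I. V n))"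
    by (simp add: sum.distrib sum_distrib_left[symmetric] distrib_left)
  also have "\<dots> \<le> 8 * T + 12 * ll * T * (66 / d^2)"
  proof -
    have "real (card I) \<le> q" using cardI Mq qi_def q_def by simp
    then have "e^2 * real (card I) \<le> e^2 * q" by (intro mult_left_mono) auto
    also have "\<dots> \<le> e^2 * q^2" using q1 by (intro mult_left_mono) (auto simp: power2_eq_square)
    finally have 1: "8 * e^2 * real (card I) \<le> 8 * T" unfolding T_def by (simp add: power_mult_distrib mult.commute)
    have "(\<Sum>n\<in>I. U n) + (\<Sum>n\<in>I. V n) \<le> 66 / d^2" using SU SV by simp
    then have "12 * ll * T * ((\<Sum>n\<in>I. U n) + (\<Sum>n\<in>I. V n)) \<le> 12 * ll * T * (66 / d^2)"
      using l1 T0 by (intro mult_left_mono) auto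
    with 1 show ?thesis by linarith
  qed
  also have "\<dots> \<le> 920 * (ll * T / d^2)"
  proof -
    have "d^2 \<le> 4^2" using d0 d4 by (intro power_mono) auto
    then have "1 \<le> 16 / d^2" using d0 by (simp add: divide_simps)
    then have "T * 1 \<le> T * (16 / d^2)" using T0 by (intro mult_left_mono) auto
    also have "T * (16 / d^2) \<le> T * (16 / d^2) * ll" using l1 T0 d0
      by (metis mult_le_cancel_left1 mult.commute mult_nonneg_nonneg zero_le_divide_iff zero_le_numeral zero_le_power2 mult_left_mono mult.right_neutral)
    finally have "T \<le> T * (16 / d^2) * ll" by simp
    moreover have "T * (16 / d^2) * ll = 16 * (ll * T / d^2)" by (simp add: field_simps)
    ultimately have "8 * T \<le> 128 * (ll * T / d^2)" by linarith
    moreover have "12 * ll * T * (66 / d^2) = 792 * (ll * T / d^2)" by (simp add: algebra_simps)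
    ultimately show ?thesis by linarith
  qed
  also have "\<dots> \<le> 920 * (ll / (d^2 * (of_int ai)^2))"
  proof -
    have "(e * q * of_int ai)^2 \<le> 1^2" using eqa e0 q0 aipos by (intro power_mono) auto
    then have "T * (of_int ai)^2 \<le> 1" unfolding T_def by (simp add: power_mult_distrib mult.commute)
    then have "T \<le> 1 / (of_int ai)^2" using aipos by (simp add: divide_simps)
    then have "ll * T / d^2 \<le> ll * (1 / (of_int ai)^2) / d^2" using l1 d0
      by (intro divide_right_mono mult_left_mono) auto
    also have "ll * (1 / (of_int ai)^2) / d^2 = ll / (d^2 * (of_int ai)^2)" by simp
    finally have "ll * T / d^2 \<le> ll / (d^2 * (of_int ai)^2)" .
    then show ?thesis by (intro mult_left_mono) auto
  qed
  finally have SL: "(\<Sum>n\<in>I. Lf n) \<le> 920 * (ll / (d^2 * (of_int ai)^2))" .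
  have "- (\<Sum>n\<in>I. Lf n) \<le> Bstar \<alpha> k M x" unfolding Beq using GL
    by (simp add: sum_negf[symmetric] sum_mono)
  moreover have "0 \<le> ll / (d^2 * (of_int ai)^2)" using l1 by simp
  ultimately have "- 1000 * (ll / (d^2 * (of_int ai)^2)) \<le> Bstar \<alpha> k M x" using SL by linarith
  then have low: "- 1000 * ln (4 / c) / ((2 - \<bar>x\<bar>)\<^sup>2 * (of_int (cf_a \<alpha> (k + 1)))\<^sup>2) \<le> Bstar \<alpha> k M x"
    by (simp add: ll_def d_def ai_def)
  show ?thesis using low up by blast
qed


theorem proposition7:
  shows "\<exists>C>0. \<forall>(\<alpha>::real) (k::nat) (M::nat) (x::real) (c::real).
    \<alpha> \<notin> \<rat> \<and> k \<ge> 1 \<and> int M < cf_q \<alpha> k \<and>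
    of_int (cf_q \<alpha> k) * dist_int (of_int (cf_q \<alpha> k) * \<alpha>) \<le> 2 * (1 - c) \<and>
    -2 < x \<and> x \<le> 2 - of_int (cf_q \<alpha> k) * dist_int (of_int (cf_q \<alpha> k) * \<alpha>) / (1 - c) \<and>
    100 / (of_int (cf_q \<alpha> k))\<^sup>2 \<le> c \<and> c < 1
    \<longrightarrow>
    - C * ln (4 / c) / ((2 - \<bar>x\<bar>)\<^sup>2 * (of_int (cf_a \<alpha> (k + 1)))\<^sup>2) \<le> Bstar \<alpha> k M x \<and>
    Bstar \<alpha> k M x \<le> C / ((of_int (cf_a \<alpha> (k + 1)))\<^sup>2 * of_int (cf_q \<alpha> k))"
    apply (rule exI[of _ "1000::real"])
  apply (rule conjI)
   apply simp
  apply (intro allI impI)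
  apply (elim conjE)
  apply (rule main_bound)
        apply assumption+
  done

end
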